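(* Let $p$ be an odd prime, $n\ge1$, $G=\mu_{p^n}$, $\alpha$ an integer whose class generates $(\mathbb{Z}/p^n\mathbb{Z})^\times$, and $\mathcal{P}$ a unital partition of $G$. Let $0\le k\le n$, $A\in\mathcal{P}_k$, $y\in A\cap B_k$, and let $u_k$ be the smallest positive integer with $y^{\alpha^{u_k}}\in A$. Then $u_k$ divides $\phi(p^{n-k})$.
   Context: A unital partition of a finite commutative group $G$ is a partition $G=\{1\}\sqcup A_0\sqcup\dots\sqcup A_s$ such that, with $a_i=\sum_{x\in A_i}x\in\mathbb{Z}[G]$, the $\mathbb{Z}$-span of $1$ and the $a_i$ is closed under multiplication in $\mathbb{Z}[G]$. $B_k=\{x^{p^k}\mid x\text{ a generator of }G\}$, $\mathcal{P}_k=\{A\in\mathcal{P}\mid A\cap B_k\neq\emptyset\}$, and $\phi$ is Euler's totient function. *)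

theory Defs
  imports "HOL-Number_Theory.Number_Theory"
begin

definition mu :: "nat \<Rightarrow> complex set" where
  "mu m = {z. z ^ m = 1}"

text \<open>Elements of the group ring Z[G] are functions G -> int (supported on G);
  multiplication is convolution.\<close>
definition gr_mult :: "complex set \<Rightarrow> (complex \<Rightarrow> int) \<Rightarrow> (complex \<Rightarrow> int) \<Rightarrow> complex \<Rightarrow> int" where
  "gr_mult G f g = (\<lambda>z. \<Sum>x\<in>G. \<Sum>y\<in>G. if x * y = z then f x * g y else 0)"

text \<open>Z-span of 1 and the class sums a_A (A in P).\<close>
definition zspan :: "complex set set \<Rightarrow> (complex \<Rightarrow> int) set" where
  "zspan P = {f. \<exists>(c0::int) (c::complex set \<Rightarrow> int).
      f = (\<lambda>z. c0 * of_bool (z = 1) + (\<Sum>A\<in>P. c A * of_bool (z \<in> A)))}"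

definition unital_partition :: "complex set \<Rightarrow> complex set set \<Rightarrow> bool" where
  "unital_partition G P \<longleftrightarrow>
     finite P \<and> (\<forall>A\<in>P. A \<noteq> {}) \<and> (\<forall>A\<in>P. \<forall>B\<in>P. A \<noteq> B \<longrightarrow> A \<inter> B = {}) \<and> \<Union>P = G - {1} \<and>
     (\<forall>f\<in>zspan P. \<forall>g\<in>zspan P. gr_mult G f g \<in> zspan P)"

definition is_generator :: "complex set \<Rightarrow> complex \<Rightarrow> bool" where
  "is_generator G x \<longleftrightarrow> x \<in> G \<and> (\<forall>z\<in>G. \<exists>m::nat. z = x ^ m)"

definition Bk :: "complex set \<Rightarrow> nat \<Rightarrow> nat \<Rightarrow> complex set" where
  "Bk G p k = {x ^ (p ^ k) | x. is_generator G x}"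

definition Pk :: "complex set \<Rightarrow> complex set set \<Rightarrow> nat \<Rightarrow> nat \<Rightarrow> complex set set" where
  "Pk G P p k = {A \<in> P. A \<inter> Bk G p k \<noteq> {}}"

end

theory Submission
  imports Defs "HOL-Computational_Algebra.Polynomial"
begin

lemma frob2:
  fixes a b :: "'a::comm_ring_1"
  assumes q: "prime q"
  shows "\<exists>c. (a+b)^q = a^q + b^q + of_nat q * c"
proof -
  have q0: "q > 0" using q prime_gt_0_nat by blast
  have "(a + b) ^ q = (\<Sum>k\<le>q. of_nat (q choose k) * a ^ k * b ^ (q - k))"
    by (rule binomial_ring)
  also have "{..q} = {0,q} \<union> {1..<q}" by auto
  also have "(\<Sum>k\<in>{0,q} \<union> {1..<q}. of_nat (q choose k) * a ^ k * b ^ (q - k))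
     = (\<Sum>k\<in>{0,q}. of_nat (q choose k) * a ^ k * b ^ (q - k)) + (\<Sum>k\<in>{1..<q}. of_nat (q choose k) * a ^ k * b ^ (q - k))"
    by (rule sum.union_disjoint) auto
  also have "(\<Sum>k\<in>{0,q}. of_nat (q choose k) * a ^ k * b ^ (q - k)) = a^q + b^q"
    using q0 by (simp add: add.commute)
  also have "(\<Sum>k\<in>{1..<q}. of_nat (q choose k) * a ^ k * b ^ (q - k))
      = of_nat q * (\<Sum>k\<in>{1..<q}. of_nat ((q choose k) div q) * a ^ k * b ^ (q - k))"
    unfolding sum_distrib_left
  proof (rule sum.cong)
    fix k assume "k \<in> {1..<q}"
    hence "q dvd (q choose k)" using q by (intro dvd_choose_prime) auto
    hence "(q choose k) = q * ((q choose k) div q)" by simp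
    hence "(of_nat (q choose k) :: 'a) = of_nat q * of_nat ((q choose k) div q)"
      by (metis of_nat_mult)
    thus "of_nat (q choose k) * a ^ k * b ^ (q - k) = of_nat q * (of_nat ((q choose k) div q) * a ^ k * b ^ (q - k))"
      by (simp add: mult.assoc)
  qed simp
  finally show ?thesis by blast
qed

lemma frob_sum:
  fixes r :: "'b \<Rightarrow> 'a::comm_ring_1"
  assumes q: "prime q" and S: "finite S"
  shows "\<exists>c. (\<Sum>i\<in>S. r i)^q = (\<Sum>i\<in>S. r i ^ q) + of_nat q * c"
  using S
proof (induction S rule: finite_induct)
  case empty
  have "q > 0" using q prime_gt_0_nat by blast
  thus ?case by (intro exI[of _ 0]) (simp add: zero_power)
next
  case (insert x F)
  then obtain c1 where c1: "(\<Sum>i\<in>F. r i)^q = (\<Sum>i\<in>F. r i ^ q) + of_nat q * c1" by blast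
  obtain c2 where c2: "(r x + (\<Sum>i\<in>F. r i))^q = r x ^ q + (\<Sum>i\<in>F. r i)^q + of_nat q * c2"
    using frob2[OF q] by blast
  show ?case using insert c1 c2
    by (intro exI[of _ "c1 + c2"]) (simp add: algebra_simps)
qed

definition psi :: "complex \<Rightarrow> int poly \<Rightarrow> complex \<Rightarrow> int" where
  "psi \<zeta> F z = (\<Sum>i\<le>degree F. if \<zeta>^i = z then coeff F i else 0)"

lemma psi_bound:
  assumes "degree F \<le> M"
  shows "psi \<zeta> F z = (\<Sum>i\<le>M. if \<zeta>^i = z then coeff F i else 0)"
  unfolding psi_def using assms
  by (intro sum.mono_neutral_left) (auto simp: coeff_eq_0)

lemma psi_add: "psi \<zeta> (F + H) z = psi \<zeta> F z + psi \<zeta> H z"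
proof -
  let ?M = "max (degree F) (degree H)"
  have "degree (F + H) \<le> ?M" by (rule degree_add_le) auto
  thus ?thesis
    by (simp add: psi_bound[of _ ?M] psi_bound[of F ?M] psi_bound[of H ?M] sum.distrib[symmetric])
      (rule sum.cong, auto)
qed

lemma psi_zero: "psi \<zeta> 0 z = 0"
  by (auto simp: psi_def intro!: sum.neutral)

lemma psi_sum: "finite I \<Longrightarrow> psi \<zeta> (\<Sum>i\<in>I. F i) z = (\<Sum>i\<in>I. psi \<zeta> (F i) z)"
  by (induction I rule: finite_induct) (auto simp: psi_add psi_zero)

lemma psi_monom: "psi \<zeta> (monom c k) z = (if \<zeta>^k = z then c else 0)"
proof -
  have "psi \<zeta> (monom c k) z = (\<Sum>i\<le>k. if \<zeta>^i = z then coeff (monom c k) i else 0)"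
    by (rule psi_bound) (simp add: degree_monom_le)
  also have "\<dots> = (\<Sum>i\<le>k. if i = k then (if \<zeta>^k = z then c else 0) else 0)"
    by (rule sum.cong) (auto simp: coeff_monom)
  finally show ?thesis by simp
qed

lemma psi_ofnat: "psi \<zeta> (of_nat q * C) z = int q * psi \<zeta> C z"
proof -
  have "of_nat q * C = smult (int q) C" by (simp add: of_nat_poly)
  show ?thesis
  proof (cases "q = 0")
    case True thus ?thesis by (simp add: psi_zero)
  next
    case False thus ?thesis using \<open>of_nat q * C = smult (int q) C\<close>
      by (auto simp: psi_def sum_distrib_left intro!: sum.cong)
  qed
qed

lemma sum_if_const: "(\<Sum>i\<in>I. if c then h i else 0) = (if c then (\<Sum>i\<in>I. h i) else 0)"
  by (cases c) auto

lemma sum_single: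
  assumes "finite S" "v \<in> S" "\<And>y. y \<in> S \<Longrightarrow> y \<noteq> v \<Longrightarrow> h y = 0"
  shows "sum h S = h v"
proof -
  have "sum h S = h v + sum h (S - {v})" using assms by (simp add: sum.remove)
  also have "sum h (S - {v}) = 0" using assms by (intro sum.neutral) auto
  finally show ?thesis by simp
qed

lemma gr_sum_left:
  assumes "finite I"
  shows "gr_mult G (\<lambda>z. \<Sum>i\<in>I. f i z) g z = (\<Sum>i\<in>I. gr_mult G (f i) g z)"
proof -
  have "(\<Sum>i\<in>I. gr_mult G (f i) g z) = (\<Sum>i\<in>I. \<Sum>x\<in>G. \<Sum>y\<in>G. if x * y = z then f i x * g y else 0)"
    by (simp add: gr_mult_def)
  also have "\<dots> = (\<Sum>x\<in>G. \<Sum>i\<in>I. \<Sum>y\<in>G. if x * y = z then f i x * g y else 0)"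
    by (rule sum.swap)
  also have "\<dots> = (\<Sum>x\<in>G. \<Sum>y\<in>G. \<Sum>i\<in>I. if x * y = z then f i x * g y else 0)"
    by (rule sum.cong[OF refl], rule sum.swap)
  also have "\<dots> = gr_mult G (\<lambda>z. \<Sum>i\<in>I. f i z) g z"
    unfolding gr_mult_def by (intro sum.cong refl) (simp add: sum_if_const sum_distrib_right)
  finally show ?thesis by simp
qed

lemma gr_sum_right:
  assumes "finite I"
  shows "gr_mult G f (\<lambda>z. \<Sum>i\<in>I. g i z) z = (\<Sum>i\<in>I. gr_mult G f (g i) z)"
proof -
  have "(\<Sum>i\<in>I. gr_mult G f (g i) z) = (\<Sum>i\<in>I. \<Sum>x\<in>G. \<Sum>y\<in>G. if x * y = z then f x * g i y else 0)"
    by (simp add: gr_mult_def)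
  also have "\<dots> = (\<Sum>x\<in>G. \<Sum>i\<in>I. \<Sum>y\<in>G. if x * y = z then f x * g i y else 0)"
    by (rule sum.swap)
  also have "\<dots> = (\<Sum>x\<in>G. \<Sum>y\<in>G. \<Sum>i\<in>I. if x * y = z then f x * g i y else 0)"
    by (rule sum.cong[OF refl], rule sum.swap)
  also have "\<dots> = gr_mult G f (\<lambda>z. \<Sum>i\<in>I. g i z) z"
    unfolding gr_mult_def by (intro sum.cong refl) (simp add: sum_if_const sum_distrib_left)
  finally show ?thesis by simp
qed

lemma gr_delta:
  assumes "finite G" "u \<in> G" "v \<in> G"
  shows "gr_mult G (\<lambda>z. if u = z then a else 0) (\<lambda>z. if v = z then b else 0) z
       = (if u * v = z then a * b else 0)"
proof -
  have "gr_mult G (\<lambda>z. if u = z then a else 0) (\<lambda>z. if v = z then b else 0) z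
     = (\<Sum>y\<in>G. if u * y = z then a * (if v = y then b else 0) else 0)"
    unfolding gr_mult_def
    by (rule trans[OF sum_single[of G u]]) (use assms in \<open>auto intro!: sum.neutral\<close>)
  also have "\<dots> = (if u * v = z then a * (if v = v then b else 0) else 0)"
    using sum_single[of G v "\<lambda>y. if u * y = z then a * (if v = y then b else 0) else 0"] assms
    by auto
  finally show ?thesis by simp
qed

lemma psi_eq: "psi \<zeta> F = (\<lambda>z. \<Sum>i\<le>degree F. if \<zeta>^i = z then coeff F i else 0)"
  by (simp add: psi_def fun_eq_iff)

lemma psi_mult:
  assumes G: "finite G" "\<And>i. \<zeta>^i \<in> G"
  shows "psi \<zeta> (F * H) z = gr_mult G (psi \<zeta> F) (psi \<zeta> H) z"
proof -
  have "F * H = (\<Sum>i\<le>degree F. monom (coeff F i) i) * (\<Sum>j\<le>degree H. monom (coeff H j) j)"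
    by (simp add: poly_as_sum_of_monoms)
  also have "\<dots> = (\<Sum>i\<le>degree F. \<Sum>j\<le>degree H. monom (coeff F i * coeff H j) (i + j))"
    by (simp add: sum_product mult_monom)
  finally have "psi \<zeta> (F * H) z = (\<Sum>i\<le>degree F. \<Sum>j\<le>degree H. if \<zeta>^(i+j) = z then coeff F i * coeff H j else 0)"
    by (simp add: psi_sum psi_monom)
  also have "\<dots> = (\<Sum>i\<le>degree F. \<Sum>j\<le>degree H.
        gr_mult G (\<lambda>z. if \<zeta>^i = z then coeff F i else 0) (\<lambda>z. if \<zeta>^j = z then coeff H j else 0) z)"
    using G by (simp add: gr_delta power_add)
  also have "\<dots> = (\<Sum>i\<le>degree F. gr_mult G (\<lambda>z. if \<zeta>^i = z then coeff F i else 0) (psi \<zeta> H) z)"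
    by (simp add: psi_eq gr_sum_right)
  also have "\<dots> = gr_mult G (psi \<zeta> F) (psi \<zeta> H) z"
    by (simp add: psi_eq[of _ F] gr_sum_left)
  finally show ?thesis .
qed

lemma pow_mod_N:
  fixes x :: complex
  assumes "x ^ N = 1"
  shows "x ^ m = x ^ (m mod N)"
proof -
  have "x ^ m = x ^ (N * (m div N) + m mod N)" by simp
  also have "\<dots> = (x ^ N) ^ (m div N) * x ^ (m mod N)" by (simp only: power_add power_mult)
  finally show ?thesis using assms by simp
qed

lemma sum_indicator_inj:
  assumes "inj_on f B" "finite B"
  shows "(\<Sum>x\<in>B. if f x = z then 1 else 0) = (of_bool (z \<in> f ` B) :: int)"
proof (cases "z \<in> f ` B")
  case True
  then obtain b where b: "b \<in> B" "z = f b" by auto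
  have "(\<Sum>x\<in>B. if f x = z then 1 else 0) = (if f b = z then 1 else (0::int))"
    by (rule sum_single) (use assms b in \<open>auto simp: inj_on_def\<close>)
  thus ?thesis using True b by simp
next
  case False thus ?thesis by (auto intro!: sum.neutral)
qed

locale uploc =
  fixes N :: nat and P :: "complex set set" and \<zeta> :: complex
  assumes N0: "N > 0" and UP: "unital_partition (mu N) P" and gen: "is_generator (mu N) \<zeta>"
begin

abbreviation "G \<equiv> mu N"

lemma finG: "finite G"
  unfolding mu_def using N0 by (intro finite_roots_unity) simp

lemma cardG: "card G = N"
  unfolding mu_def using N0 by (rule card_roots_unity_eq)

lemma zetaN: "\<zeta> ^ N = 1"
  using gen unfolding is_generator_def mu_def by simp

lemma pow_swap: "((x::complex) ^ i) ^ M = (x ^ M) ^ i"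
  unfolding power_mult[symmetric] by (simp add: mult.commute)

lemma zeta_pow: "\<zeta> ^ i \<in> G"
  unfolding mu_def using zetaN by (simp add: pow_swap)

lemma G_img: "G = (\<lambda>i. \<zeta> ^ i) ` {..<N}"
proof
  show "(\<lambda>i. \<zeta> ^ i) ` {..<N} \<subseteq> G" using zeta_pow by auto
  show "G \<subseteq> (\<lambda>i. \<zeta> ^ i) ` {..<N}"
  proof
    fix x assume "x \<in> G"
    then obtain m where "x = \<zeta> ^ m" using gen unfolding is_generator_def by blast
    hence "x = \<zeta> ^ (m mod N)" using pow_mod_N[OF zetaN] by simp
    thus "x \<in> (\<lambda>i. \<zeta> ^ i) ` {..<N}" using N0 by auto
  qed
qed

lemma zeta_inj: "inj_on (\<lambda>i. \<zeta> ^ i) {..<N}"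
  by (rule eq_card_imp_inj_on) (use G_img cardG in auto)

lemma sum_reindex: "(\<Sum>i<N. g (\<zeta> ^ i)) = (\<Sum>x\<in>G. g x)"
  using sum.reindex[OF zeta_inj, of g] G_img by simp

lemma G_mult: "x \<in> G \<Longrightarrow> y \<in> G \<Longrightarrow> x * y \<in> G"
  unfolding mu_def by (simp add: power_mult_distrib)

lemma G_pow: "x \<in> G \<Longrightarrow> x ^ q \<in> G"
  unfolding mu_def by (simp add: pow_swap)

lemma G_nz: "x \<in> G \<Longrightarrow> x \<noteq> 0"
  unfolding mu_def using N0 by (auto simp: zero_power)

lemma root_one:
  assumes "w \<in> G" "w ^ q = 1" "coprime q N"
  shows "w = 1"
proof -
  have wN: "w ^ N = 1" using assms unfolding mu_def by simp
  have "coprime (int q) (int N)" using assms(3) by simp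
  hence g: "gcd (int q) (int N) = 1" by (simp only: coprime_iff_gcd_eq_1)
  obtain a b where "a * int q + b * int N = gcd (int q) (int N)" using bezout_int by blast
  hence ab: "int q * a + int N * b = 1" using g by (simp add: mult.commute)
  have w0: "w \<noteq> 0" using G_nz assms by auto
  have "w = w powi (int q * a + int N * b)" using ab by simp
  also have "\<dots> = w powi (int q * a) * w powi (int N * b)"
    using w0 by (rule power_int_add[OF disjI1])
  also have "\<dots> = (w ^ q) powi a * (w ^ N) powi b"
    by (simp only: power_int_mult power_int_of_nat)
  finally show ?thesis using assms wN by simp
qed

lemma pow_inj:
  assumes "coprime q N"
  shows "inj_on (\<lambda>x. x ^ q) G"
proof
  fix x y assume xy: "x \<in> G" "y \<in> G" "x ^ q = y ^ q"
  have "x / y \<in> G" using xy unfolding mu_def by (simp add: power_divide)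
  moreover have "(x / y) ^ q = 1" using xy G_nz by (simp add: power_divide)
  ultimately have "x / y = 1" using root_one assms by blast
  thus "x = y" using G_nz xy by simp
qed

lemma UPc: "finite P \<and> (\<forall>A\<in>P. A \<noteq> {}) \<and> (\<forall>A\<in>P. \<forall>B\<in>P. A \<noteq> B \<longrightarrow> A \<inter> B = {}) \<and> \<Union>P = G - {1} \<and>
     (\<forall>f\<in>zspan P. \<forall>g\<in>zspan P. gr_mult G f g \<in> zspan P)"
  using UP unfolding unital_partition_def .

lemma UP_facts:
  "finite P" "\<And>A. A \<in> P \<Longrightarrow> A \<noteq> {}"
  "\<And>A B. A \<in> P \<Longrightarrow> B \<in> P \<Longrightarrow> A \<noteq> B \<Longrightarrow> A \<inter> B = {}"
  "\<Union>P = G - {1}"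
  "\<And>f g. f \<in> zspan P \<Longrightarrow> g \<in> zspan P \<Longrightarrow> gr_mult G f g \<in> zspan P"
proof -
  note a = UPc[THEN conjunct1]
  note b = UPc[THEN conjunct2, THEN conjunct1]
  note c = UPc[THEN conjunct2, THEN conjunct2, THEN conjunct1]
  note d = UPc[THEN conjunct2, THEN conjunct2, THEN conjunct2, THEN conjunct1]
  note e = UPc[THEN conjunct2, THEN conjunct2, THEN conjunct2, THEN conjunct2]
  show "finite P" by (rule a)
  show "\<And>A. A \<in> P \<Longrightarrow> A \<noteq> {}" using b by (rule bspec)
  show "\<And>A B. A \<in> P \<Longrightarrow> B \<in> P \<Longrightarrow> A \<noteq> B \<Longrightarrow> A \<inter> B = {}" using c by simp
  show "\<Union>P = G - {1}" by (rule d)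
  show "\<And>f g. f \<in> zspan P \<Longrightarrow> g \<in> zspan P \<Longrightarrow> gr_mult G f g \<in> zspan P" using e by simp
qed

lemma part_sub: "A \<in> P \<Longrightarrow> A \<subseteq> G - {1}"
proof -
  assume "A \<in> P"
  hence "A \<subseteq> \<Union>P" by (rule Union_upper)
  thus ?thesis by (simp only: UP_facts(4))
qed

lemma part_eq: "A \<in> P \<Longrightarrow> B \<in> P \<Longrightarrow> A \<inter> B \<noteq> {} \<Longrightarrow> A = B"
  using UP_facts(3) by metis

lemma zspan_const:
  assumes "f \<in> zspan P" "C \<in> P" "z \<in> C" "z' \<in> C"
  shows "f z = f z'"
proof -
  obtain c0 c where f: "f = (\<lambda>z. c0 * of_bool (z = 1) + (\<Sum>A\<in>P. c A * of_bool (z \<in> A)))"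
    using assms(1) unfolding zspan_def by blast
  have val: "f w = c C" if "w \<in> C" for w
  proof -
    have "w \<noteq> 1" using part_sub[OF assms(2)] that by auto
    moreover have "(\<Sum>A\<in>P. c A * of_bool (w \<in> A)) = c C * of_bool (w \<in> C)"
      by (rule sum_single) (use UP_facts(1) assms(2) that part_eq in auto)
    ultimately show ?thesis using f that by simp
  qed
  show ?thesis using val assms by simp
qed

lemma delta_zspan: "(\<lambda>z. of_bool (z = 1)) \<in> zspan P"
  unfolding zspan_def by (intro CollectI exI[of _ 1] exI[of _ "\<lambda>_. 0"]) simp

lemma ind_zspan:
  assumes "B \<in> P"
  shows "(\<lambda>z. of_bool (z \<in> B)) \<in> zspan P"
  unfolding zspan_def
proof (intro CollectI exI[of _ 0] exI[of _ "\<lambda>A. of_bool (A = B)"] ext)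
  fix z
  have "(\<Sum>A\<in>P. of_bool (A = B) * of_bool (z \<in> A)) = of_bool (B = B) * (of_bool (z \<in> B) :: int)"
    by (rule sum_single) (use UP_facts(1) assms in auto)
  hence "(\<Sum>A\<in>P. of_bool (A = B) * of_bool (z \<in> A)) = (of_bool (z \<in> B) :: int)" by simp
  thus "(of_bool (z \<in> B) :: int) = 0 * of_bool (z = 1) + (\<Sum>A\<in>P. of_bool (A = B) * of_bool (z \<in> A))"
    by simp
qed

definition PB :: "complex set \<Rightarrow> int poly" where
  "PB B = (\<Sum>i<N. monom (of_bool (\<zeta>^i \<in> B)) i)"

lemma psi_PB:
  assumes "B \<subseteq> G"
  shows "psi \<zeta> (PB B) z = of_bool (z \<in> B)"
proof -
  have "psi \<zeta> (PB B) z = (\<Sum>i<N. (\<lambda>x. if x = z then of_bool (x \<in> B) else 0) (\<zeta>^i))"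
    by (simp add: PB_def psi_sum psi_monom)
  also have "\<dots> = (\<Sum>x\<in>G. if x = z then of_bool (x \<in> B) else 0)"
    by (rule sum_reindex)
  also have "\<dots> = of_bool (z \<in> B)" using finG assms by auto
  finally show ?thesis .
qed

lemma psi_one: "psi \<zeta> 1 = (\<lambda>z. of_bool (z = 1))"
  by (auto simp: psi_def fun_eq_iff)

lemma psi_pow_zspan:
  assumes "B \<in> P"
  shows "psi \<zeta> (PB B ^ k) \<in> zspan P"
proof (induction k)
  case 0 thus ?case using delta_zspan by (simp add: psi_one)
next
  case (Suc k)
  have B: "B \<subseteq> G" using part_sub[OF assms] by blast
  have "psi \<zeta> (PB B ^ Suc k) = gr_mult G (psi \<zeta> (PB B)) (psi \<zeta> (PB B ^ k))"
    by (rule ext) (simp add: psi_mult[OF finG zeta_pow])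
  also have "psi \<zeta> (PB B) = (\<lambda>z. of_bool (z \<in> B))" using psi_PB[OF B] by (simp add: fun_eq_iff)
  finally show ?case using UP_facts(5)[OF ind_zspan[OF assms] Suc.IH] by simp
qed

lemma frob_PB:
  assumes q: "prime q" "coprime q N" and B: "B \<subseteq> G"
  shows "\<exists>d. \<forall>z. psi \<zeta> (PB B ^ q) z = of_bool (z \<in> (\<lambda>x. x^q) ` B) + int q * d z"
proof -
  have q0: "q > 0" using q prime_gt_0_nat by blast
  obtain C where C: "PB B ^ q = (\<Sum>i<N. monom (of_bool (\<zeta>^i \<in> B)) i ^ q) + of_nat q * C"
    unfolding PB_def using frob_sum[OF q(1), of "{..<N}"] by auto
  have "PB B ^ q = (\<Sum>i<N. monom (of_bool (\<zeta>^i \<in> B)) (i * q)) + of_nat q * C"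
  proof -
    have ob: "(of_bool b :: int) ^ q = of_bool b" for b using q0 by (cases b) (auto simp: zero_power)
    show ?thesis using C by (simp add: monom_power ob)
  qed
  hence "psi \<zeta> (PB B ^ q) z = (\<Sum>i<N. if \<zeta>^(i*q) = z then of_bool (\<zeta>^i \<in> B) else 0) + int q * psi \<zeta> C z"
    for z by (simp add: psi_add psi_sum psi_monom psi_ofnat)
  moreover have "(\<Sum>i<N. if \<zeta>^(i*q) = z then of_bool (\<zeta>^i \<in> B) else 0) = (of_bool (z \<in> (\<lambda>x. x^q) ` B) :: int)"
    for z
  proof -
    have "(\<Sum>i<N. if \<zeta>^(i*q) = z then of_bool (\<zeta>^i \<in> B) else 0)
        = (\<Sum>i<N. (\<lambda>x. if x \<in> B then (if x ^ q = z then 1 else 0) else 0) (\<zeta>^i))"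
      by (intro sum.cong refl) (auto simp: power_mult)
    also have "\<dots> = (\<Sum>x\<in>G. if x \<in> B then (if x ^ q = z then 1 else 0) else (0::int))"
      by (rule sum_reindex)
    also have "\<dots> = (\<Sum>x\<in>G \<inter> B. if x ^ q = z then 1 else 0)"
      using finG by (simp add: sum.inter_restrict)
    also have "G \<inter> B = B" using B by blast
    also have "(\<Sum>x\<in>B. if x ^ q = z then 1 else (0::int)) = of_bool (z \<in> (\<lambda>x. x^q) ` B)"
      by (rule sum_indicator_inj) (use inj_on_subset[OF pow_inj[OF q(2)] B] B finite_subset[OF B finG] in auto)
    finally show ?thesis .
  qed
  ultimately show ?thesis by (intro exI[of _ "psi \<zeta> C"]) auto
qed

definition multiplier :: "nat \<Rightarrow> bool" where
  "multiplier m \<longleftrightarrow> (\<forall>B\<in>P. (\<lambda>x. x^m) ` B \<subseteq> G - {1} \<and>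
      (\<forall>C\<in>P. C \<inter> (\<lambda>x. x^m) ` B \<noteq> {} \<longrightarrow> C \<subseteq> (\<lambda>x. x^m) ` B))"

lemma prime_multiplier:
  assumes q: "prime q" "coprime q N"
  shows "multiplier q"
  unfolding multiplier_def
proof (intro ballI conjI impI)
  fix B assume B: "B \<in> P"
  have BG: "B \<subseteq> G" using part_sub[OF B] by blast
  show "(\<lambda>x. x^q) ` B \<subseteq> G - {1}"
  proof
    fix w assume "w \<in> (\<lambda>x. x^q) ` B"
    then obtain x where x: "x \<in> B" "w = x ^ q" by auto
    have "x \<in> G" "x \<noteq> 1" using part_sub[OF B] x by auto
    thus "w \<in> G - {1}" using x root_one[OF _ _ q(2)] G_pow by auto
  qed
  fix C assume C: "C \<in> P" "C \<inter> (\<lambda>x. x^q) ` B \<noteq> {}"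
  then obtain z0 where z0: "z0 \<in> C" "z0 \<in> (\<lambda>x. x^q) ` B" by blast
  obtain d where d: "\<And>z. psi \<zeta> (PB B ^ q) z = of_bool (z \<in> (\<lambda>x. x^q) ` B) + int q * d z"
    using frob_PB[OF q BG] by blast
  have f: "psi \<zeta> (PB B ^ q) \<in> zspan P" by (rule psi_pow_zspan[OF B])
  show "C \<subseteq> (\<lambda>x. x^q) ` B"
  proof
    fix z assume z: "z \<in> C"
    show "z \<in> (\<lambda>x. x^q) ` B"
    proof (rule ccontr)
      assume nz: "z \<notin> (\<lambda>x. x^q) ` B"
      have "psi \<zeta> (PB B ^ q) z = psi \<zeta> (PB B ^ q) z0" by (rule zspan_const[OF f C(1) z z0(1)])
      hence "int q * d z = 1 + int q * d z0" using d[of z] d[of z0] nz z0(2) by simp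
      hence "int q * (d z - d z0) = 1" by (simp add: algebra_simps)
      hence "int q dvd 1" by (metis dvd_triv_left)
      hence "q = 1" by simp
      thus False using q(1) by simp
    qed
  qed
qed

lemma multiplier_1: "multiplier 1"
  unfolding multiplier_def using part_sub part_eq by auto

lemma multiplier_mult:
  assumes a: "multiplier a" and b: "multiplier b"
  shows "multiplier (a * b)"
  unfolding multiplier_def
proof (intro ballI conjI impI)
  fix B assume B: "B \<in> P"
  define U where "U = (\<lambda>x. x^a) ` B"
  have img: "(\<lambda>x. x^(a*b)) ` B = (\<lambda>x. x^b) ` U"
    unfolding U_def by (simp add: image_image power_mult)
  have Ua: "U \<subseteq> G - {1}" "\<And>C. C \<in> P \<Longrightarrow> C \<inter> U \<noteq> {} \<Longrightarrow> C \<subseteq> U"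
    using a B unfolding multiplier_def U_def by blast+
  have cov: "\<exists>C'\<in>P. u \<in> C' \<and> C' \<subseteq> U" if "u \<in> U" for u
  proof -
    have "u \<in> \<Union>P" using that Ua(1) UP_facts(4) by blast
    then obtain C' where "C' \<in> P" "u \<in> C'" by blast
    thus ?thesis using Ua(2) that by blast
  qed
  show "(\<lambda>x. x^(a*b)) ` B \<subseteq> G - {1}"
  proof
    fix w assume "w \<in> (\<lambda>x. x^(a*b)) ` B"
    then obtain u where u: "u \<in> U" "w = u ^ b" using img by auto
    then obtain C' where "C' \<in> P" "u \<in> C'" using cov by blast
    thus "w \<in> G - {1}" using b u unfolding multiplier_def by blast
  qed
  fix C assume C: "C \<in> P" "C \<inter> (\<lambda>x. x^(a*b)) ` B \<noteq> {}"
  then obtain w where w: "w \<in> C" "w \<in> (\<lambda>x. x^b) ` U" using img by blast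
  then obtain u where u: "u \<in> U" "w = u ^ b" by auto
  then obtain C' where C': "C' \<in> P" "u \<in> C'" "C' \<subseteq> U" using cov by blast
  have "C \<inter> (\<lambda>x. x^b) ` C' \<noteq> {}" using w u C' by blast
  hence "C \<subseteq> (\<lambda>x. x^b) ` C'" using b C C' unfolding multiplier_def by blast
  also have "\<dots> \<subseteq> (\<lambda>x. x^b) ` U" using C' by blast
  finally show "C \<subseteq> (\<lambda>x. x^(a*b)) ` B" using img by simp
qed

lemma multiplier_coprime:
  assumes "m > 0" "coprime m N"
  shows "multiplier m"
  using assms
proof (induction m rule: less_induct)
  case (less m)
  show ?case
  proof (cases "m = 1")
    case True thus ?thesis using multiplier_1 by simp
  next
    case False
    then obtain q where q: "prime q" "q dvd m" using prime_factor_nat by blast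
    then obtain m' where m': "m = q * m'" by blast
    have q1: "q > 1" using q prime_gt_1_nat by blast
    have "m' > 0" using less.prems m' by auto
    hence "m' < m" using m' q1 by simp
    moreover have "coprime m' N" "coprime q N" using less.prems m' by auto
    ultimately have "multiplier m'" "multiplier q"
      using less.IH \<open>m' > 0\<close> prime_multiplier q(1) by auto
    thus ?thesis using multiplier_mult m' by simp
  qed
qed

lemma G_euler:
  assumes "coprime m N" "x \<in> G"
  shows "x ^ (m ^ totient N) = x"
proof -
  have xN: "x ^ N = 1" using assms unfolding mu_def by simp
  have "[m ^ totient N = 1] (mod N)" using assms euler_theorem by blast
  hence "m ^ totient N mod N = 1 mod N" unfolding cong_def .
  have "x ^ (m ^ totient N) = x ^ (m ^ totient N mod N)" by (rule pow_mod_N[OF xN])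
  also have "\<dots> = x ^ (1 mod N)" using \<open>m ^ totient N mod N = 1 mod N\<close> by (simp only:)
  finally have "x ^ (m ^ totient N) = x ^ (1 mod N)" .
  also have "\<dots> = x" using pow_mod_N[OF xN, of 1] by simp
  finally show ?thesis .
qed

lemma mult_perm:
  assumes m: "m > 0" "coprime m N" and B: "B \<in> P"
    and Cp: "C \<in> P" "C \<inter> (\<lambda>x. x^m) ` B \<noteq> {}"
  shows "(\<lambda>x. x^m) ` B = C"
proof -
  define t where "t = totient N"
  have t0: "t > 0" using N0 by (simp add: t_def)
  have mt: "m * m ^ (t - 1) = m ^ t" using t0 by (cases t) auto
  have M1: "multiplier m" by (rule multiplier_coprime[OF m])
  have M2: "multiplier (m ^ (t-1))" using m by (intro multiplier_coprime) auto
  have C1: "C \<subseteq> (\<lambda>x. x^m) ` B" using M1 B Cp unfolding multiplier_def by blast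
  obtain z where z: "z \<in> C" "z \<in> (\<lambda>x. x^m) ` B" using Cp by blast
  then obtain b where b: "b \<in> B" "z = b ^ m" by auto
  have bG: "b \<in> G" using part_sub[OF B] b by blast
  have "z ^ (m ^ (t-1)) = b ^ (m * m ^ (t-1))" by (simp only: b(2) power_mult)
  also have "\<dots> = b" using G_euler[OF m(2) bG] mt by (simp only: t_def)
  finally have "z ^ (m ^ (t-1)) = b" .
  hence "B \<inter> (\<lambda>x. x^(m^(t-1))) ` C \<noteq> {}" using b z by blast
  hence B2: "B \<subseteq> (\<lambda>x. x^(m^(t-1))) ` C" using M2 B Cp unfolding multiplier_def by blast
  have "(\<lambda>x. x^m) ` B \<subseteq> C"
  proof
    fix w assume "w \<in> (\<lambda>x. x^m) ` B"
    then obtain x where x: "x \<in> B" "w = x ^ m" by auto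
    then obtain c where c: "c \<in> C" "x = c ^ (m^(t-1))" using B2 by auto
    have cG: "c \<in> G" using part_sub[OF Cp(1)] c by blast
    have "w = c ^ (m ^ (t-1) * m)" by (simp only: x(2) c(2) power_mult)
    also have "\<dots> = c ^ (m ^ t)" using mt by (simp only: mult.commute)
    finally have "w = c ^ (m ^ t)" .
    also have "\<dots> = c" using G_euler[OF m(2) cG] by (simp add: t_def)
    finally show "w \<in> C" using c by simp
  qed
  thus ?thesis using C1 Cp by blast
qed

end

lemma powi_mod:
  fixes z :: complex
  assumes "z ^ M = 1" "M > 0"
  shows "z powi j = z ^ nat (j mod int M)"
proof -
  have z0: "z \<noteq> 0" using assms by (auto simp: zero_power)
  have "z powi j = z powi (int M * (j div int M) + j mod int M)" by simp
  also have "\<dots> = z powi (int M * (j div int M)) * z powi (j mod int M)"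
    using z0 by (rule power_int_add[OF disjI1])
  also have "z powi (int M * (j div int M)) = (z ^ M) powi (j div int M)"
    by (simp only: power_int_mult power_int_of_nat)
  finally have e1: "z powi j = (z ^ M) powi (j div int M) * z powi (j mod int M)" .
  have "j mod int M = int (nat (j mod int M))" using assms(2) by simp
  hence "z powi (j mod int M) = z ^ nat (j mod int M)" by (metis power_int_of_nat)
  thus ?thesis using e1 assms(1) by simp
qed

lemma int_euler:
  fixes a :: int
  assumes "coprime a (int M)" "M > 0"
  shows "[a ^ totient M = 1] (mod int M)"
proof -
  define b where "b = nat (a mod int M)"
  have bi: "int b = a mod int M" using assms(2) by (simp add: b_def)
  have "coprime (a mod int M) (int M)" using assms by simp
  hence "coprime b M" using bi by (metis coprime_int_iff)
  hence "[b ^ totient M = 1] (mod M)" by (rule euler_theorem)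
  hence "[int b ^ totient M = 1] (mod int M)" by (metis cong_int_iff of_nat_1 of_nat_power)
  moreover have "[int b = a] (mod int M)" using bi by (simp add: cong_def)
  ultimately show ?thesis by (metis cong_pow cong_sym cong_trans)
qed

theorem mainTheorem6:
  fixes p n k :: nat and \<alpha> :: int and P :: "complex set set" and A :: "complex set" and y :: complex
  assumes "prime p" and "odd p" and "n \<ge> 1"
    and "coprime \<alpha> (int p)"
    and "\<forall>b::int. coprime b (int p ^ n) \<longrightarrow> (\<exists>m::nat. [\<alpha> ^ m = b] (mod (int p ^ n)))"
    and "unital_partition (mu (p ^ n)) P"
    and "k \<le> n"
    and "A \<in> Pk (mu (p ^ n)) P p k"
    and "y \<in> A \<inter> Bk (mu (p ^ n)) p k"
  shows "(LEAST u::nat. u > 0 \<and> y powi (\<alpha> ^ u) \<in> A) dvd totient (p ^ (n - k))"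
proof -
  define N where "N = p ^ n"
  have p1: "p > 1" using assms(1) prime_gt_1_nat by blast
  have N0: "N > 0" using p1 by (simp add: N_def)
  obtain x where x: "is_generator (mu N) x" "y = x ^ (p ^ k)"
    using assms(9) unfolding Bk_def N_def by blast
  have AP: "A \<in> P" and yA: "y \<in> A" using assms(8,9) unfolding Pk_def by auto
  interpret U: uploc N P x using N0 assms(6) x(1) by unfold_locales (simp_all add: N_def)
  have AG: "A \<subseteq> mu N - {1}" by (rule U.part_sub[OF AP])
  define M where "M = p ^ (n - k)"
  have M0: "M > 0" using p1 by (simp add: M_def)
  have yM: "y ^ M = 1"
  proof -
    have "y ^ M = x ^ (p ^ k * p ^ (n - k))" by (simp add: x(2) M_def power_mult)
    also have "p ^ k * p ^ (n - k) = N" using assms(7) by (simp add: N_def flip: power_add)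
    finally show ?thesis using U.zetaN by simp
  qed
  have y1: "y \<noteq> 1" using yA AG by blast
  have M1: "M > 1"
  proof (rule ccontr)
    assume "\<not> M > 1" hence "M = 1" using M0 by simp
    thus False using yM y1 by simp
  qed
  have copM: "coprime \<alpha> (int M)" using assms(4) by (simp add: M_def)
  define t where "t = totient M"
  have t0: "t > 0" using M0 by (simp add: t_def)
  have "[\<alpha> ^ t = 1] (mod int M)" unfolding t_def by (rule int_euler[OF copM M0])
  hence "\<alpha> ^ t mod int M = 1" using M1 by (simp add: cong_def)
  hence yt: "y powi (\<alpha> ^ t) = y" using powi_mod[OF yM M0] by simp
  define S where "S = (\<lambda>u::nat. u > 0 \<and> y powi (\<alpha> ^ u) \<in> A)"
  have St: "S t" using t0 yt yA by (simp add: S_def)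
  define u0 where "u0 = (LEAST u. S u)"
  have Su0: "S u0" unfolding u0_def by (rule LeastI[of S t, OF St])
  have u0pos: "u0 > 0" using Su0 by (simp add: S_def)
  have yN: "y ^ N = 1" using yA AG unfolding mu_def by auto
  define m0 where "m0 = nat (\<alpha> ^ u0 mod int N)"
  have copN: "coprime (\<alpha> ^ u0) (int N)" using assms(4) by (simp add: N_def)
  have copr: "coprime (\<alpha> ^ u0 mod int N) (int N)" using copN N0 by simp
  have m0i: "int m0 = \<alpha> ^ u0 mod int N" using N0 by (simp add: m0_def)
  have copm0: "coprime m0 N" using copr m0i by (metis coprime_int_iff)
  have N1: "N > 1" using p1 assms(3) unfolding N_def by (intro one_less_power) auto
  have m0pos: "m0 > 0"
  proof (rule ccontr)
    assume "\<not> m0 > 0" hence "m0 = 0" by simp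
    hence "coprime 0 N" using copm0 by simp
    thus False using N1 by simp
  qed
  have powG: "w powi (\<alpha> ^ u0) = w ^ m0" if "w \<in> mu N" for w
    using that powi_mod[of w N] N0 unfolding mu_def m0_def by simp
  have yu_G: "y powi j \<in> mu N" for j
    using powi_mod[OF yN N0] yA AG U.G_pow by auto
  have "y ^ m0 \<in> A" using Su0 powG[of y] yA AG by (auto simp: S_def)
  hence "y ^ m0 \<in> A \<inter> (\<lambda>w. w ^ m0) ` A" using yA by simp
  hence "A \<inter> (\<lambda>w. w ^ m0) ` A \<noteq> {}" by (metis equals0D)
  hence Aeq: "(\<lambda>w. w ^ m0) ` A = A" by (rule U.mult_perm[OF m0pos copm0 AP AP])
  have closed: "w \<in> A \<longleftrightarrow> w ^ m0 \<in> A" if "w \<in> mu N" for w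
  proof
    assume "w \<in> A" thus "w ^ m0 \<in> A" using Aeq by blast
  next
    assume "w ^ m0 \<in> A"
    hence "w ^ m0 \<in> (\<lambda>w. w ^ m0) ` A" using Aeq by simp
    then obtain a where a: "a \<in> A" "w ^ m0 = a ^ m0" by (auto simp del: Aeq)
    have "w = a" using U.pow_inj[OF copm0] that a AG unfolding inj_on_def by blast
    thus "w \<in> A" using a by simp
  qed
  have step: "y powi (\<alpha> ^ u) \<in> A \<longleftrightarrow> y powi (\<alpha> ^ (u + u0)) \<in> A" for u
  proof -
    have "y powi (\<alpha> ^ (u + u0)) = (y powi (\<alpha> ^ u)) powi (\<alpha> ^ u0)"
      by (simp add: power_add power_int_mult)
    also have "\<dots> = (y powi (\<alpha> ^ u)) ^ m0" by (rule powG[OF yu_G])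
    finally show ?thesis using closed[OF yu_G] by simp
  qed
  have steps: "y powi (\<alpha> ^ u) \<in> A \<longleftrightarrow> y powi (\<alpha> ^ (u + s * u0)) \<in> A" for u s
  proof (induction s)
    case (Suc s)
    have e: "u + Suc s * u0 = (u + s * u0) + u0" by simp
    show ?case unfolding e using Suc.IH step[of "u + s * u0"] by blast
  qed simp
  define r where "r = t mod u0"
  have "r + (t div u0) * u0 = t" by (simp add: r_def)
  hence "y powi (\<alpha> ^ (r + (t div u0) * u0)) \<in> A" using yt yA by simp
  hence "y powi (\<alpha> ^ r) \<in> A" using steps[of r "t div u0"] by blast
  have r0: "r = 0"
  proof (rule ccontr)
    assume "r \<noteq> 0"
    hence "S r" using \<open>y powi (\<alpha> ^ r) \<in> A\<close> by (simp add: S_def)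
    moreover have "r < u0" using u0pos by (simp add: r_def)
    ultimately show False using not_less_Least[of r S] by (simp add: u0_def)
  qed
  have "u0 dvd t" using r0 unfolding r_def by (simp add: mod_eq_0_iff_dvd)
  thus ?thesis by (simp add: u0_def S_def t_def M_def)
qed

end
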